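(* Let $(X,d^X,\mu,T)$ be an ergodic compact model flow. For every $\varepsilon,\delta>0$ there is $\delta_1>0$ such that for every $x\in X$ and every nonempty compact interval $K\subseteq\mathbb{R}$ with $\mathcal{L}^1(K)\ge1$, \[\mathrm{cov}\Big(\big(B^{d^{\mathbf{X}}_K}_{\delta_1\mathcal{L}^1(K)}(x),\ d^{\mathbf{X},\infty}_K\big),\ \delta\Big)<\exp(\varepsilon\,\mathcal{L}^1(K)).\]
   Context: Compact model flow: $(X,d^X)$ compact metric, $T:\mathbb{R}\curvearrowright X$ jointly continuous, $\mu$ a $T$-invariant Borel probability. For measurable $F\subseteq\mathbb{R}$ of finite measure, $d^{\mathbf{X}}_F(x,x')=\int_Fd^X(T^tx,T^tx')\,dt$; for compact $F$, $d^{\mathbf{X},\infty}_F(x,x')=\sup_{t\in F}d^X(T^tx,T^tx')$. $B^d_r(x)=\{y:d(x,y)<r\}$. For a (pseudo)metric space $(Z,d)$, $\mathrm{cov}((Z,d),r)=\min\{|F|:F\subseteq Z,\ \bigcup_{z\in F}B^d_r(z)=Z\}$. $\mathcal{L}^1$ is Lebesgue measure. *)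

theory Defs
  imports "HOL-Probability.Probability"
begin

text \<open>Compact model flow: a compact subset X of a metric type (metric d^X = dist),
  a jointly continuous real flow T on X, and a T-invariant Borel probability measure M on X.\<close>
definition compact_model_flow :: "'a::metric_space set \<Rightarrow> (real \<Rightarrow> 'a \<Rightarrow> 'a) \<Rightarrow> 'a measure \<Rightarrow> bool" where
  "compact_model_flow X T M \<longleftrightarrow>
     compact X \<and>
     (\<forall>t. \<forall>x\<in>X. T t x \<in> X) \<and>
     (\<forall>x\<in>X. T 0 x = x) \<and>
     (\<forall>s t. \<forall>x\<in>X. T (s + t) x = T s (T t x)) \<and>
     continuous_on (UNIV \<times> X) (\<lambda>(t, x). T t x) \<and>
     prob_space M \<and> space M = X \<and> sets M = sets (restrict_space borel X) \<and>
     (\<forall>t. T t \<in> measurable M M \<and> distr M M (T t) = M)"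

definition ergodic_flow :: "'a set \<Rightarrow> (real \<Rightarrow> 'a \<Rightarrow> 'a) \<Rightarrow> 'a measure \<Rightarrow> bool" where
  "ergodic_flow X T M \<longleftrightarrow>
     (\<forall>A\<in>sets M. (\<forall>t. T t -` A \<inter> X = A) \<longrightarrow> measure M A = 0 \<or> measure M A = 1)"

definition flow_int_dist :: "(real \<Rightarrow> 'a::metric_space \<Rightarrow> 'a) \<Rightarrow> real set \<Rightarrow> 'a \<Rightarrow> 'a \<Rightarrow> real" where
  "flow_int_dist T F x x' = (LINT t:F|lborel. dist (T t x) (T t x'))"

definition flow_sup_dist :: "(real \<Rightarrow> 'a::metric_space \<Rightarrow> 'a) \<Rightarrow> real set \<Rightarrow> 'a \<Rightarrow> 'a \<Rightarrow> real" where
  "flow_sup_dist T F x x' = (SUP t\<in>F. dist (T t x) (T t x'))"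

definition pball :: "'a set \<Rightarrow> ('a \<Rightarrow> 'a \<Rightarrow> real) \<Rightarrow> real \<Rightarrow> 'a \<Rightarrow> 'a set" where
  "pball Z d r x = {y\<in>Z. d x y < r}"

text \<open>cov((Z,d),r): minimal cardinality of a finite F \<subseteq> Z whose r-balls cover Z
  (infinity if no such finite F exists).\<close>
definition cov :: "'a set \<Rightarrow> ('a \<Rightarrow> 'a \<Rightarrow> real) \<Rightarrow> real \<Rightarrow> ereal" where
  "cov Z d r = Inf {ereal (real (card F)) | F. finite F \<and> F \<subseteq> Z \<and> (\<Union>z\<in>F. pball Z d r z) = Z}"

end

theory Submission
  imports Defs
begin

lemma flow_unif:
  assumes "compact_model_flow X T M" "e > 0"
  shows "\<exists>d>0. \<forall>p\<in>{-1..1} \<times> X. \<forall>q\<in>{-1..1} \<times> X. dist p q < d \<longrightarrow> dist (T (fst p) (snd p)) (T (fst q) (snd q)) < e"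
proof -
  have c: "compact X" "continuous_on (UNIV \<times> X) (\<lambda>(t, x). T t x)" using assms by (auto simp: compact_model_flow_def)
  have "continuous_on ({-1..1} \<times> X) (\<lambda>(t, x). T t x)" by (rule continuous_on_subset[OF c(2)]) auto
  moreover have "compact ({-1..1::real} \<times> X)" using c(1) by (intro compact_Times) auto
  ultimately have "uniformly_continuous_on ({-1..1} \<times> X) (\<lambda>(t, x). T t x)" by (rule compact_uniformly_continuous)
  then obtain d where "d > 0" "\<forall>p\<in>{-1..1} \<times> X. \<forall>q\<in>{-1..1} \<times> X. dist q p < d \<longrightarrow> dist ((\<lambda>(t, x). T t x) q) ((\<lambda>(t, x). T t x) p) < e"
    using assms(2) unfolding uniformly_continuous_on_def by metis
  thus ?thesis by (intro exI[of _ d]) (auto simp: dist_commute split: prod.splits)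
qed

lemma time_unif:
  assumes "compact_model_flow X T M" "e > 0"
  shows "\<exists>\<rho>>0. \<rho> \<le> 1 \<and> (\<forall>z\<in>X. \<forall>u. \<bar>u\<bar> \<le> \<rho> \<longrightarrow> dist (T u z) z < e)"
proof -
  obtain d where d: "d > 0" "\<forall>p\<in>{-1..1} \<times> X. \<forall>q\<in>{-1..1} \<times> X. dist p q < d \<longrightarrow> dist (T (fst p) (snd p)) (T (fst q) (snd q)) < e"
    using flow_unif[OF assms] by blast
  have T0: "\<forall>x\<in>X. T 0 x = x" using assms by (auto simp: compact_model_flow_def)
  show ?thesis
  proof (intro exI[of _ "min (d/2) 1"] conjI ballI allI impI)
    fix z u assume z: "z \<in> X" and u: "\<bar>u\<bar> \<le> min (d/2) 1"
    have "dist (u, z) (0, z) < d" using u d(1) by (simp add: dist_Pair_Pair dist_real_def)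
    hence "dist (T u z) (T 0 z) < e" using d(2) z u by force
    thus "dist (T u z) z < e" using T0 z by simp
  qed (use d in auto)
qed

lemma space_unif:
  assumes "compact_model_flow X T M" "e > 0"
  shows "\<exists>\<eta>>0. \<forall>z\<in>X. \<forall>z'\<in>X. dist z z' < \<eta> \<longrightarrow> (\<forall>s\<in>{0..1}. dist (T s z) (T s z') < e)"
proof -
  obtain d where d: "d > 0" "\<forall>p\<in>{-1..1} \<times> X. \<forall>q\<in>{-1..1} \<times> X. dist p q < d \<longrightarrow> dist (T (fst p) (snd p)) (T (fst q) (snd q)) < e"
    using flow_unif[OF assms] by blast
  show ?thesis
  proof (intro exI[of _ d] conjI ballI impI)
    fix z z' s assume z: "z \<in> X" "z' \<in> X" "dist z z' < d" "s \<in> {0..1::real}"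
    have "dist (s, z) (s, z') < d" using z by (simp add: dist_Pair_Pair)
    thus "dist (T s z) (T s z') < e" using d(2) z by force
  qed (use d in auto)
qed

lemma cont_dist:
  assumes "compact_model_flow X T M" "x \<in> X" "y \<in> X"
  shows "continuous_on S (\<lambda>t. dist (T t x) (T t y))"
proof -
  have c: "continuous_on (UNIV \<times> X) (\<lambda>(t, x). T t x)" using assms by (auto simp: compact_model_flow_def)
  have cx: "continuous_on UNIV (\<lambda>t. T t z)" if "z \<in> X" for z
  proof -
    have "continuous_on UNIV ((\<lambda>(t, x). T t x) \<circ> (\<lambda>t. (t, z)))"
      by (rule continuous_on_compose) (auto intro!: continuous_intros continuous_on_subset[OF c] simp: that)
    thus ?thesis by (simp add: o_def)
  qed
  show ?thesis
    using continuous_on_dist[OF cx[OF assms(2)] cx[OF assms(3)]] continuous_on_subset by blast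
qed
lemma int_lower:
  fixes f :: "real \<Rightarrow> real"
  assumes cont: "continuous_on {a..b} f" and nn: "\<forall>t\<in>{a..b}. 0 \<le> f t" and h: "h > 0"
    and b: "b = a + real n * h" and Bad: "Bad \<subseteq> {..<n}" and c: "0 \<le> c"
    and big: "\<forall>k\<in>Bad. \<forall>t\<in>{a + real k * h .. a + real (Suc k) * h}. c \<le> f t"
  shows "real (card Bad) * c * h \<le> (LINT t:{a..b}|lborel. f t)"
proof -
  define W where "W k = {a + real k * h ..< a + real (Suc k) * h}" for k
  define g where "g t = (\<Sum>k\<in>Bad. c * indicator (W k) t)" for t
  have finB: "finite Bad" using Bad finite_subset by blast
  have mW: "measure lborel (W k) = h" for k using h by (simp add: W_def algebra_simps del: content_real_eq_0 )
  have intW: "integrable lborel (indicator (W k) :: real \<Rightarrow> real)" for k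
    unfolding W_def using h by (intro integrable_real_indicator) (auto simp: algebra_simps)
  have ig: "integrable lborel g" using intW unfolding g_def[abs_def] by simp
  have Ig: "integral\<^sup>L lborel g = real (card Bad) * c * h"
    unfolding g_def using intW by (simp add: integral_sum mW)
  have irhs: "integrable lborel (\<lambda>t. indicator {a..b} t *\<^sub>R f t)"
    by (rule borel_integrable_compact) (auto intro: cont)
  have disj: "k = k'" if "t \<in> W k" "t \<in> W k'" for t k k'
  proof (rule ccontr)
    assume "k \<noteq> k'"
    then consider "Suc k \<le> k'" | "Suc k' \<le> k" by linarith
    thus False
    proof cases
      case 1 hence "real (Suc k) * h \<le> real k' * h" using h by (intro mult_right_mono) auto
      thus False using that by (auto simp: W_def)
    next
      case 2 hence "real (Suc k') * h \<le> real k * h" using h by (intro mult_right_mono) auto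
      thus False using that by (auto simp: W_def)
    qed
  qed
  have pt: "g t \<le> indicator {a..b} t *\<^sub>R f t" for t
  proof (cases "\<exists>k\<in>Bad. t \<in> W k")
    case True
    then obtain k0 where k0: "k0 \<in> Bad" "t \<in> W k0" by blast
    have "g t = (\<Sum>k\<in>{k0}. c * indicator (W k) t)"
      unfolding g_def using finB k0 disj by (intro sum.mono_neutral_right) (auto simp: indicator_def)
    also have "\<dots> = c" using k0 by simp
    finally have gt: "g t = c" .
    have "k0 < n" using Bad k0 by auto
    hence "(1 + real k0) * h \<le> real n * h" using h by (intro mult_right_mono) auto
    moreover have "0 \<le> real k0 * h" using h by simp
    moreover have "a + real k0 * h \<le> t" "t < a + (1 + real k0) * h" using k0(2) by (auto simp: W_def)
    ultimately have tab: "t \<in> {a..b}" using b by auto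
    have "c \<le> f t" using big k0 k0(2) by (auto simp: W_def)
    thus ?thesis using gt tab by simp
  next
    case False
    hence "g t = 0" unfolding g_def by (auto intro!: sum.neutral)
    thus ?thesis using nn by (simp add: indicator_def)
  qed
  have "integral\<^sup>L lborel g \<le> integral\<^sup>L lborel (\<lambda>t. indicator {a..b} t *\<^sub>R f t)"
    by (rule integral_mono[OF ig irhs pt])
  thus ?thesis by (simp add: Ig set_lebesgue_integral_def)
qed
lemma window_exists:
  fixes a b h t :: real
  assumes h: "h > 0" and b: "b = a + real n * h" and t: "t \<in> {a..b}" and n: "n \<ge> 1"
  shows "\<exists>k<n. a + real k * h \<le> t \<and> t \<le> a + real (Suc k) * h"
proof -
  define q where "q = (t - a) / h"
  have q0: "0 \<le> q" using t h by (simp add: q_def)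
  have qn: "q \<le> real n" using t h b by (simp add: q_def field_simps)
  have tq: "t = a + q * h" using h by (simp add: q_def)
  show ?thesis
  proof (cases "nat \<lfloor>q\<rfloor> < n")
    case True
    have "real (nat \<lfloor>q\<rfloor>) \<le> q" using q0 by linarith
    moreover have "q \<le> real (Suc (nat \<lfloor>q\<rfloor>))" using q0 by linarith
    ultimately have "real (nat \<lfloor>q\<rfloor>) * h \<le> q * h" "q * h \<le> real (Suc (nat \<lfloor>q\<rfloor>)) * h"
      using h by (auto intro: mult_right_mono)
    thus ?thesis using True tq by (intro exI[of _ "nat \<lfloor>q\<rfloor>"]) auto
  next
    case False
    hence "q = real n" using qn q0 by linarith
    moreover have "real (n - 1) * h \<le> real n * h" using h by (intro mult_right_mono) auto
    moreover have "real (Suc (n - 1)) = real n" using n by simp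
    ultimately show ?thesis using n tq by (intro exI[of _ "n - 1"]) auto
  qed
qed
lemma count_codes:
  fixes C :: "'a set" and \<theta> m :: real
  assumes "finite C" "0 < \<theta>" "\<theta> \<le> 1"
  shows "real (card {c \<in> PiE {..<n} (\<lambda>_. insert None (Some ` C)). real (card {k\<in>{..<n}. c k \<noteq> None}) \<le> m})
     \<le> (1 + real (card C) * \<theta>) ^ n / \<theta> powr m"
proof -
  define A where "A = insert None (Some ` C)"
  define w where "w v = (if v = None then 1 else \<theta>)" for v :: "'a option"
  define cs where "cs c = card {k\<in>{..<n}. c k \<noteq> None}" for c :: "nat \<Rightarrow> 'a option"
  define S where "S = {c \<in> PiE {..<n} (\<lambda>_. A). real (cs c) \<le> m}"
  have finA: "finite A" using assms(1) by (simp add: A_def)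
  have sumA: "(\<Sum>v\<in>A. w v) = 1 + real (card C) * \<theta>"
  proof -
    have "None \<notin> Some ` C" by auto
    hence "(\<Sum>v\<in>A. w v) = w None + (\<Sum>v\<in>Some ` C. w v)" using assms(1) by (simp add: A_def)
    also have "(\<Sum>v\<in>Some ` C. w v) = (\<Sum>c\<in>C. w (Some c))" by (simp add: sum.reindex)
    also have "\<dots> = real (card C) * \<theta>" by (simp add: w_def)
    finally show ?thesis by (simp add: w_def)
  qed
  have prodw: "(\<Prod>k\<in>{..<n}. w (c k)) = \<theta> ^ cs c" for c
  proof -
    have "(\<Prod>k\<in>{..<n}. w (c k)) = (\<Prod>k\<in>{..<n} \<inter> {k. c k \<noteq> None}. \<theta>) * (\<Prod>k\<in>{..<n} \<inter> - {k. c k \<noteq> None}. 1)"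
      unfolding w_def by (subst prod.If_cases[symmetric]) (auto intro!: prod.cong)
    also have "\<dots> = \<theta> ^ cs c" by (simp add: cs_def Int_def)
    finally show ?thesis .
  qed
  have total: "(\<Sum>c\<in>PiE {..<n} (\<lambda>_. A). \<theta> ^ cs c) = (1 + real (card C) * \<theta>) ^ n"
  proof -
    have "(\<Prod>k\<in>{..<n}. \<Sum>v\<in>A. w v) = (\<Sum>c\<in>PiE {..<n} (\<lambda>_. A). \<Prod>k\<in>{..<n}. w (c k))"
      by (rule prod_sum_PiE) (use finA in auto)
    thus ?thesis by (simp add: sumA prodw)
  qed
  have finP: "finite (PiE {..<n} (\<lambda>_. A))" using finA by (simp add: finite_PiE)
  have "real (card S) = (\<Sum>c\<in>S. 1)" by simp
  also have "\<dots> \<le> (\<Sum>c\<in>S. \<theta> ^ cs c / \<theta> powr m)"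
  proof (rule sum_mono)
    fix c assume "c \<in> S"
    hence "real (cs c) \<le> m" by (simp add: S_def)
    hence "\<theta> powr m \<le> \<theta> powr real (cs c)" using assms by (simp add: powr_mono')
    also have "\<dots> = \<theta> ^ cs c" using assms by (simp add: powr_realpow)
    finally show "1 \<le> \<theta> ^ cs c / \<theta> powr m" using assms by simp
  qed
  also have "\<dots> \<le> (\<Sum>c\<in>PiE {..<n} (\<lambda>_. A). \<theta> ^ cs c / \<theta> powr m)"
    by (rule sum_mono2) (use finP assms in \<open>auto simp: S_def\<close>)
  also have "\<dots> = (1 + real (card C) * \<theta>) ^ n / \<theta> powr m"
    by (simp add: sum_divide_distrib[symmetric] total)
  finally show ?thesis by (simp add: S_def A_def cs_def)
qed

theorem mainTheorem6:
  fixes X :: "'a::metric_space set" and T :: "real \<Rightarrow> 'a \<Rightarrow> 'a" and M :: "'a measure"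
  assumes "compact_model_flow X T M" and "ergodic_flow X T M"
  shows "\<forall>\<epsilon>>0. \<forall>\<delta>>0. \<exists>\<delta>1>0. \<forall>x\<in>X. \<forall>a b. a \<le> b \<and> measure lborel {a..b} \<ge> 1 \<longrightarrow>
           cov (pball X (flow_int_dist T {a..b}) (\<delta>1 * measure lborel {a..b}) x)
               (flow_sup_dist T {a..b}) \<delta>
             < ereal (exp (\<epsilon> * measure lborel {a..b}))"
proof (intro allI impI)
  fix \<epsilon> \<delta> :: real
  assume e: "\<epsilon> > 0" and d: "\<delta> > 0"
  note cmf = assms(1)
  have TX: "\<forall>t. \<forall>x\<in>X. T t x \<in> X" and Tadd: "\<forall>s t. \<forall>x\<in>X. T (s + t) x = T s (T t x)"
    and cX: "compact X" using cmf by (auto simp: compact_model_flow_def)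
  obtain \<tau> where \<tau>: "\<tau> > 0" "\<tau> \<le> 1" "\<forall>z\<in>X. \<forall>u. \<bar>u\<bar> \<le> \<tau> \<longrightarrow> dist (T u z) z < \<delta>/12"
    using time_unif[OF cmf, of "\<delta>/12"] d by auto
  obtain \<eta> where \<eta>: "\<eta> > 0" "\<forall>z\<in>X. \<forall>z'\<in>X. dist z z' < \<eta> \<longrightarrow> (\<forall>s\<in>{0..1}. dist (T s z) (T s z') < \<delta>/3)"
    using space_unif[OF cmf, of "\<delta>/3"] d by auto
  obtain C where C: "finite C" "C \<subseteq> X" "X \<subseteq> (\<Union>c\<in>C. ball c (\<eta>/2))"
    using seq_compact_imp_totally_bounded[OF compact_imp_seq_compact[OF cX]] \<eta>(1)
    by (metis half_gt_zero)
  define N where "N = card C"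
  define \<theta> where "\<theta> = min (1/2) (\<epsilon> * \<tau> / (4 * (real N + 1)))"
  have \<theta>0: "\<theta> > 0" using e \<tau> by (simp add: \<theta>_def)
  have \<theta>1: "\<theta> \<le> 1/2" unfolding \<theta>_def by (rule min.cobounded1)
  have N\<theta>: "real N * \<theta> \<le> \<epsilon> * \<tau> / 4"
  proof -
    have "real N * \<theta> \<le> (real N + 1) * \<theta>" using \<theta>0 by simp
    also have "\<dots> \<le> (real N + 1) * (\<epsilon> * \<tau> / (4 * (real N + 1)))"
      by (intro mult_left_mono) (auto simp: \<theta>_def)
    also have "\<dots> = \<epsilon> * \<tau> / 4" by (simp add: field_simps add_pos_nonneg)
    finally show ?thesis .
  qed
  define l\<theta> where "l\<theta> = - ln \<theta>"
  have l\<theta>0: "l\<theta> > 0" using \<theta>0 \<theta>1 by (simp add: l\<theta>_def)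
  define \<delta>1 where "\<delta>1 = \<epsilon> * \<delta> * \<tau> / (48 * l\<theta>)"
  have \<delta>10: "\<delta>1 > 0" using e d \<tau> l\<theta>0 by (simp add: \<delta>1_def)
  show "\<exists>\<delta>1>0. \<forall>x\<in>X. \<forall>a b. a \<le> b \<and> measure lborel {a..b} \<ge> 1 \<longrightarrow>
           cov (pball X (flow_int_dist T {a..b}) (\<delta>1 * measure lborel {a..b}) x)
               (flow_sup_dist T {a..b}) \<delta>
             < ereal (exp (\<epsilon> * measure lborel {a..b}))"
  proof (intro exI[of _ \<delta>1] conjI \<delta>10 ballI allI impI)
    fix x and a b :: real assume x: "x \<in> X" and ab: "a \<le> b \<and> measure lborel {a..b} \<ge> 1"
    define L where "L = b - a"
    have mL: "measure lborel {a..b} = L" using ab by (simp add: L_def)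
    have L1: "L \<ge> 1" using ab mL by (metis)
    define n where "n = nat \<lceil>L / \<tau>\<rceil>"
    have n1: "real n \<ge> L / \<tau>" unfolding n_def by linarith
    have Lt: "L / \<tau> \<ge> 1" using L1 \<tau> by (simp add: field_simps)
    have n2: "real n \<le> 2 * L / \<tau>"
    proof -
      have "real n \<le> L / \<tau> + 1" unfolding n_def using Lt by linarith
      thus ?thesis using Lt by simp
    qed
    have npos: "n \<ge> 1" using n1 Lt by linarith
    define h where "h = L / real n"
    have h0: "h > 0" using L1 npos by (simp add: h_def)
    have hb: "b = a + real n * h" using npos by (simp add: h_def L_def)
    have h\<tau>: "h \<le> \<tau>" using n1 \<tau> npos L1 by (simp add: h_def field_simps)
    have h\<tau>2: "\<tau> / 2 \<le> h" using n2 \<tau> npos L1 by (simp add: h_def field_simps)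
    define Z where "Z = pball X (flow_int_dist T {a..b}) (\<delta>1 * L) x"
    define Good where "Good y k \<longleftrightarrow> (\<forall>t\<in>{a + real k * h .. a + real (Suc k) * h}. dist (T t x) (T t y) < \<delta>/3)" for y k
    define jj where "jj z = (SOME c. c \<in> C \<and> z \<in> ball c (\<eta>/2))" for z
    have jj: "jj z \<in> C \<and> z \<in> ball (jj z) (\<eta>/2)" if "z \<in> X" for z
    proof -
      have "\<exists>c. c \<in> C \<and> z \<in> ball c (\<eta>/2)" using C(3) that by blast
      thus ?thesis unfolding jj_def by (rule someI_ex)
    qed
    define code where "code y = (\<lambda>k\<in>{..<n}. if Good y k then None else Some (jj (T (a + real k * h) y)))" for y
    define A where "A = insert None (Some ` C)"
    define m where "m = 6 * \<delta>1 * L / (\<delta> * h)"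
    define S where "S = {c \<in> PiE {..<n} (\<lambda>_. A). real (card {k\<in>{..<n}. c k \<noteq> None}) \<le> m}"
    have ZX: "Z \<subseteq> X" by (auto simp: Z_def pball_def)
    have codeS: "code y \<in> S" if y: "y \<in> Z" for y
    proof -
      have yX: "y \<in> X" using y ZX by auto
      have yd: "flow_int_dist T {a..b} x y < \<delta>1 * L" using y by (simp add: Z_def pball_def)
      have inP: "code y \<in> PiE {..<n} (\<lambda>_. A)"
        using jj TX yX by (auto simp: code_def A_def)
      define Bad where "Bad = {k\<in>{..<n}. \<not> Good y k}"
      have supp: "{k\<in>{..<n}. code y k \<noteq> None} = Bad" by (auto simp: code_def Bad_def)
      have big: "\<forall>k\<in>Bad. \<forall>t\<in>{a + real k * h .. a + real (Suc k) * h}. \<delta>/6 \<le> dist (T t x) (T t y)"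
      proof (intro ballI)
        fix k t assume k: "k \<in> Bad" and t: "t \<in> {a + real k * h .. a + real (Suc k) * h}"
        obtain t0 where t0: "t0 \<in> {a + real k * h .. a + real (Suc k) * h}" "dist (T t0 x) (T t0 y) \<ge> \<delta>/3"
          using k by (auto simp: Bad_def Good_def not_less)
        have "\<bar>t - t0\<bar> \<le> h" using t t0(1) by (auto simp: algebra_simps)
        hence tt: "\<bar>t - t0\<bar> \<le> \<tau>" using h\<tau> by linarith
        have e1: "dist (T t z) (T t0 z) < \<delta>/12" if "z \<in> X" for z
        proof -
          have "T t z = T (t - t0) (T t0 z)" using Tadd that by (metis diff_add_cancel)
          thus ?thesis using \<tau>(3) TX that tt by auto
        qed
        have tr1: "dist (T t0 x) (T t0 y) \<le> dist (T t0 x) (T t x) + dist (T t x) (T t0 y)" by (rule dist_triangle)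
        have tr2: "dist (T t x) (T t0 y) \<le> dist (T t x) (T t y) + dist (T t y) (T t0 y)" by (rule dist_triangle)
        have "dist (T t0 x) (T t x) < \<delta>/12" using e1[OF x] by (simp add: dist_commute)
        moreover have "dist (T t y) (T t0 y) < \<delta>/12" using e1[OF yX] by simp
        ultimately show "\<delta>/6 \<le> dist (T t x) (T t y)"
          using t0(2) tr1 tr2 by linarith
      qed
      have cont: "continuous_on {a..b} (\<lambda>t. dist (T t x) (T t y))" by (rule cont_dist[OF cmf x yX])
      have "real (card Bad) * (\<delta>/6) * h \<le> (LINT t:{a..b}|lborel. dist (T t x) (T t y))"
        by (rule int_lower[OF cont _ h0 hb _ _ big]) (use d in \<open>auto simp: Bad_def\<close>)
      also have "\<dots> < \<delta>1 * L" using yd by (simp add: flow_int_dist_def)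
      finally have "real (card Bad) * (\<delta> * h) < 6 * \<delta>1 * L" by simp
      hence "real (card Bad) \<le> m" using d h0 by (simp add: m_def field_simps)
      thus ?thesis using inP supp by (simp add: S_def)
    qed
    have sep: "flow_sup_dist T {a..b} y y' < \<delta>" if y: "y \<in> Z" "y' \<in> Z" "code y = code y'" for y y'
    proof -
      have yX: "y \<in> X" "y' \<in> X" using y ZX by auto
      have pt: "dist (T t y) (T t y') \<le> 2 * \<delta> / 3" if t: "t \<in> {a..b}" for t
      proof -
        obtain k where k: "k < n" "a + real k * h \<le> t" "t \<le> a + real (Suc k) * h"
          using window_exists[OF h0 hb t npos] by blast
        have tw: "t \<in> {a + real k * h .. a + real (Suc k) * h}" using k by auto
        have ck: "code y k = code y' k" using y(3) by simp
        show ?thesis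
        proof (cases "Good y k")
          case True
          hence "Good y' k" using ck k(1) by (auto simp: code_def split: if_splits)
          hence "dist (T t x) (T t y') < \<delta>/3" using tw by (auto simp: Good_def)
          moreover have "dist (T t x) (T t y) < \<delta>/3" using True tw by (auto simp: Good_def)
          moreover have "dist (T t y) (T t y') \<le> dist (T t x) (T t y) + dist (T t x) (T t y')"
            by (rule dist_triangle3)
          ultimately show ?thesis by linarith
        next
          case False
          define tk where "tk = a + real k * h"
          have "jj (T tk y) = jj (T tk y')" using False ck k(1) by (auto simp: code_def tk_def split: if_splits)
          moreover have "T tk y \<in> X" "T tk y' \<in> X" using TX yX by auto
          ultimately have "dist (T tk y) (T tk y') < \<eta>"
            using jj[of "T tk y"] jj[of "T tk y'"]
            by (metis (no_types, lifting) dist_commute dist_triangle_half_r mem_ball)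
          moreover have s01: "t - tk \<in> {0..1}" using k h\<tau> \<tau>(2) by (auto simp: tk_def algebra_simps)
          ultimately have "dist (T (t - tk) (T tk y)) (T (t - tk) (T tk y')) < \<delta>/3"
            using \<eta>(2) \<open>T tk y \<in> X\<close> \<open>T tk y' \<in> X\<close> by blast
          moreover have "T t z = T (t - tk) (T tk z)" if "z \<in> X" for z using Tadd that by (metis diff_add_cancel)
          ultimately have "dist (T t y) (T t y') < \<delta>/3" using yX by simp
          thus ?thesis using d by simp
        qed
      qed
      have "flow_sup_dist T {a..b} y y' \<le> 2 * \<delta> / 3"
        unfolding flow_sup_dist_def proof (rule cSUP_least)
          show "{a..b} \<noteq> {}" using ab by simp
        qed (rule pt)
      thus ?thesis using d by simp
    qed
    have finS: "finite S"
      by (rule finite_subset[of _ "PiE {..<n} (\<lambda>_. A)"]) (use C(1) in \<open>auto simp: S_def A_def intro!: finite_PiE\<close>)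
    define rep where "rep c = (SOME y. y \<in> Z \<and> code y = c)" for c
    have rep: "rep (code y) \<in> Z \<and> code (rep (code y)) = code y" if "y \<in> Z" for y
      unfolding rep_def by (rule someI_ex) (use that in blast)
    define F where "F = rep ` (code ` Z)"
    have cZS: "code ` Z \<subseteq> S" using codeS by auto
    have finF: "finite F" unfolding F_def using finite_subset[OF cZS finS] by simp
    have FZ: "F \<subseteq> Z" using rep by (auto simp: F_def)
    have covers: "(\<Union>z\<in>F. pball Z (flow_sup_dist T {a..b}) \<delta> z) = Z"
    proof
      show "(\<Union>z\<in>F. pball Z (flow_sup_dist T {a..b}) \<delta> z) \<subseteq> Z" by (auto simp: pball_def)
      show "Z \<subseteq> (\<Union>z\<in>F. pball Z (flow_sup_dist T {a..b}) \<delta> z)"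
      proof
        fix y assume y: "y \<in> Z"
        have "flow_sup_dist T {a..b} (rep (code y)) y < \<delta>" using sep rep[OF y] y by metis
        moreover have "rep (code y) \<in> F" using y by (auto simp: F_def)
        ultimately show "y \<in> (\<Union>z\<in>F. pball Z (flow_sup_dist T {a..b}) \<delta> z)"
          using y by (auto simp: pball_def)
      qed
    qed
    have covle: "cov Z (flow_sup_dist T {a..b}) \<delta> \<le> ereal (real (card F))"
      unfolding cov_def by (rule Inf_lower) (use finF FZ covers in blast)
    have "card F \<le> card (code ` Z)" unfolding F_def using finite_subset[OF cZS finS] by (rule card_image_le)
    also have "\<dots> \<le> card S" using cZS finS by (rule card_mono[rotated])
    finally have cFS: "real (card F) \<le> real (card S)" by simp
    have cS: "real (card S) \<le> (1 + real N * \<theta>) ^ n / \<theta> powr m"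
      using count_codes[OF C(1) \<theta>0, of n m] \<theta>1 by (simp add: S_def A_def N_def)
    have p1: "(1 + real N * \<theta>) ^ n \<le> exp (\<epsilon> * L / 2)"
    proof -
      have "(1 + real N * \<theta>) ^ n \<le> exp (real N * \<theta>) ^ n"
        by (rule power_mono) (use \<theta>0 in \<open>auto intro: add_nonneg_nonneg\<close>)
      also have "\<dots> = exp (real n * (real N * \<theta>))" by (simp add: exp_of_nat_mult)
      also have "\<dots> \<le> exp (\<epsilon> * L / 2)"
      proof -
        have "real n * (real N * \<theta>) \<le> (2 * L / \<tau>) * (\<epsilon> * \<tau> / 4)"
          by (rule mult_mono[OF n2 N\<theta>]) (use L1 \<tau> \<theta>0 in auto)
        also have "\<dots> = \<epsilon> * L / 2" using \<tau> by (simp add: field_simps)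
        finally show ?thesis by simp
      qed
      finally show ?thesis .
    qed
    have p2: "1 / \<theta> powr m \<le> exp (\<epsilon> * L / 4)"
    proof -
      have "1 / \<theta> powr m = exp (m * l\<theta>)" using \<theta>0 by (simp add: powr_def l\<theta>_def exp_minus field_simps)
      also have "m * l\<theta> = \<epsilon> * L * \<tau> / (8 * h)"
        using l\<theta>0 d h0 by (simp add: m_def \<delta>1_def field_simps)
      also have "\<dots> \<le> \<epsilon> * L / 4"
      proof -
        have "\<epsilon> * L * \<tau> \<le> \<epsilon> * L * (2 * h)" using h\<tau>2 e L1 by (intro mult_left_mono) auto
        thus ?thesis using h0 by (simp add: field_simps)
      qed
      finally show ?thesis by simp
    qed
    have "real (card F) \<le> exp (\<epsilon> * L / 2) * exp (\<epsilon> * L / 4)"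
    proof -
      have "(1 + real N * \<theta>) ^ n / \<theta> powr m = (1 + real N * \<theta>) ^ n * (1 / \<theta> powr m)" by simp
      also have "\<dots> \<le> exp (\<epsilon> * L / 2) * exp (\<epsilon> * L / 4)"
        by (rule mult_mono[OF p1 p2]) auto
      finally show ?thesis using cFS cS by linarith
    qed
    also have "\<dots> < exp (\<epsilon> * L)"
    proof -
      have "\<epsilon> * L / 2 + \<epsilon> * L / 4 < \<epsilon> * L" using e L1 by simp
      thus ?thesis by (simp add: exp_add[symmetric])
    qed
    finally have "ereal (real (card F)) < ereal (exp (\<epsilon> * L))" by simp
    with covle have "cov Z (flow_sup_dist T {a..b}) \<delta> < ereal (exp (\<epsilon> * L))" by (rule le_less_trans)
    then show "cov (pball X (flow_int_dist T {a..b}) (\<delta>1 * measure lborel {a..b}) x) (flow_sup_dist T {a..b}) \<delta> < ereal (exp (\<epsilon> * measure lborel {a..b}))"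
      by (simp only: mL Z_def)
  qed
qed
end
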